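(* Let $p,r$ be positive integers, $q=p+r$, and let $\Phi:U_{pq}(\mathbb{H})\to\mathbb{C}^{r\times 2p}$ be the map $$\Phi(Q)=\begin{pmatrix}U & V\end{pmatrix}\begin{pmatrix}Z-X & W-Y\\ \bar Y-\bar W & \bar Z-\bar X\end{pmatrix}^{-1},$$ where $Q=(Q_0;Q_1;Q_2)$ with $Q_0=Z+Wj$, $Q_1=X+Yj$, $Q_2=U+Vj$ ($Z,W,X,Y\in\mathbb{C}^{p\times p}$, $U,V\in\mathbb{C}^{r\times p}$). Then the complex valued components of $\Phi$ form an orthogonal harmonic family of $\mathbf{GL}_p(\mathbb{H})$-invariant functions on $U_{pq}(\mathbb{H})$, equipped with the semi-Euclidean metric.
   Context: $\mathbb{H}=\{z+wj: z,w\in\mathbb{C}\}$. $U_{pq}(\mathbb{H})=\{Q\in\mathbb{H}^{(p+q)\times p}: -Q_0^*Q_0+Q_1^*Q_1+Q_2^*Q_2<0\}$ (negative definite on $\mathbb{H}^p\setminus\{0\}$), where $Q_0,Q_1$ have $p$ rows and $Q_2$ has $r$ rows; $\mathbf{GL}_p(\mathbb{H})$ acts by right multiplication. The semi-Euclidean metric is $(X,Y)=\mathfrak{Re}\,\mathrm{trace}(X^*\mathrm{diag}(-I_p,I_q)Y)$; in the complex coordinates it is $-|dZ|^2-|dW|^2+|dX|^2+|dY|^2+|dU|^2+|dV|^2$. For a semi-Riemannian manifold $(M,g)$ and complex functions $\phi,\psi$, $\tau(\phi)$ is the Laplace–Beltrami operator (extended complex-linearly) and $\kappa(\phi,\psi)=g(\mathrm{grad}\,\phi,\mathrm{grad}\,\psi)$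 with $g$ extended complex-bilinearly. A set $\Omega$ of complex functions is an orthogonal harmonic family if $\tau(\phi)=0$ and $\kappa(\phi,\psi)=0$ for all $\phi,\psi\in\Omega$. *)

theory Defs
  imports "HOL-Analysis.Analysis"
begin

text \<open>A quaternionic m x n matrix  A + B j  (A, B complex m x n matrices) is represented
  by the pair (A, B).  Multiplication uses  j c = cnj c j  and  j^2 = -1.\<close>

type_synonym ('m, 'n) qmat = "(complex^'n^'m) \<times> (complex^'n^'m)"

definition cmat_cnj :: "complex^'n^'m \<Rightarrow> complex^'n^'m" where
  "cmat_cnj A = (\<chi> i k. cnj (A $ i $ k))"

definition qmult :: "('m::finite, 'n::finite) qmat \<Rightarrow> ('n, 'k::finite) qmat \<Rightarrow> ('m, 'k) qmat" where
  "qmult M N = (case M of (A, B) \<Rightarrow> case N of (C, D) \<Rightarrow>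
      (A ** C - B ** cmat_cnj D, A ** D + B ** cmat_cnj C))"

text \<open>Quaternionic conjugate transpose: (A + B j)^* = A^* - B^T j.\<close>
definition qadj :: "('m::finite, 'n::finite) qmat \<Rightarrow> ('n, 'm) qmat" where
  "qadj M = (case M of (A, B) \<Rightarrow> (transpose (cmat_cnj A), - transpose B))"

definition qid :: "('n::finite, 'n) qmat" where
  "qid = (mat 1, 0)"

definition qinvertible :: "('n::finite, 'n) qmat \<Rightarrow> bool" where
  "qinvertible g \<longleftrightarrow> (\<exists>h. qmult g h = qid \<and> qmult h g = qid)"

definition qneg_def :: "('p::finite, 'p) qmat \<Rightarrow> bool" where
  "qneg_def H \<longleftrightarrow> (\<forall>x :: ('p, 1) qmat. x \<noteq> 0 \<longrightarrow>
      Re (fst (qmult (qadj x) (qmult H x)) $ 1 $ 1) < 0)"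

text \<open>Rows of Q in H^{(p+q) x p}, q = p + r, are indexed by  'p + ('p + 'r):
  Inl i are the rows of Q_0, Inr (Inl i) those of Q_1, Inr (Inr k) those of Q_2.\<close>

type_synonym ('p, 'r) qpoint = "('p + ('p + 'r), 'p) qmat"

definition Jsig :: "complex^('p::finite + ('p + 'r::finite))^('p + ('p + 'r))" where
  "Jsig = (\<chi> i k. if i = k then (case i of Inl _ \<Rightarrow> -1 | Inr _ \<Rightarrow> 1) else 0)"

definition Upq :: "('p::finite, 'r::finite) qpoint set" where
  "Upq = {Q. qneg_def (qmult (qadj Q) (qmult (Jsig, 0) Q))}"

text \<open>Semi-Euclidean metric (X,Y) = Re trace (X^* diag(-I_p, I_q) Y); the real part of a
  quaternion a + b j is Re a.\<close>
definition sE_metric :: "('p::finite, 'r::finite) qpoint \<Rightarrow> ('p, 'r) qpoint \<Rightarrow> real" where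
  "sE_metric X Y = Re (trace (fst (qmult (qadj X) (qmult (Jsig, 0) Y))))"

definition dpart :: "('a::real_normed_vector \<Rightarrow> complex) \<Rightarrow> 'a \<Rightarrow> 'a \<Rightarrow> complex" where
  "dpart f x v = frechet_derivative f (at x) v"

text \<open>The standard real basis  Basis  of the ambient space is orthogonal for the
  (flat) semi-Euclidean metric with  g(b,b) = +-1, so the Laplace-Beltrami operator and
  kappa(phi,psi) = g(grad phi, grad psi) are given by the formulas below
  (g^{bb} = 1 / g(b,b)).\<close>
definition tau :: "(('p::finite, 'r::finite) qpoint \<Rightarrow> complex) \<Rightarrow> ('p, 'r) qpoint \<Rightarrow> complex" where
  "tau f Q = (\<Sum>b\<in>Basis. complex_of_real (1 / sE_metric b b) * dpart (\<lambda>Q'. dpart f Q' b) Q b)"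

definition kappa :: "(('p::finite, 'r::finite) qpoint \<Rightarrow> complex) \<Rightarrow> (('p, 'r) qpoint \<Rightarrow> complex)
      \<Rightarrow> ('p, 'r) qpoint \<Rightarrow> complex" where
  "kappa f g Q = (\<Sum>b\<in>Basis. complex_of_real (1 / sE_metric b b) * dpart f Q b * dpart g Q b)"

definition twice_diff_on :: "('a::real_normed_vector \<Rightarrow> complex) \<Rightarrow> 'a set \<Rightarrow> bool" where
  "twice_diff_on f S \<longleftrightarrow> (\<forall>x\<in>S. f differentiable (at x) \<and>
      (\<forall>v. (\<lambda>y. dpart f y v) differentiable (at x)))"

definition orthogonal_harmonic_family ::
  "('p::finite, 'r::finite) qpoint set \<Rightarrow> (('p, 'r) qpoint \<Rightarrow> complex) set \<Rightarrow> bool" where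
  "orthogonal_harmonic_family S \<Omega> \<longleftrightarrow>
     (\<forall>\<phi>\<in>\<Omega>. twice_diff_on \<phi> S \<and> (\<forall>Q\<in>S. tau \<phi> Q = 0)) \<and>
     (\<forall>\<phi>\<in>\<Omega>. \<forall>\<psi>\<in>\<Omega>. \<forall>Q\<in>S. kappa \<phi> \<psi> Q = 0)"

definition GL_invariant_on :: "('p::finite, 'r::finite) qpoint set \<Rightarrow> (('p, 'r) qpoint \<Rightarrow> 'b) \<Rightarrow> bool" where
  "GL_invariant_on S f \<longleftrightarrow> (\<forall>Q\<in>S. \<forall>g :: ('p, 'p) qmat. qinvertible g \<longrightarrow> f (qmult Q g) = f Q)"

text \<open>Q_0 = Z + W j, Q_1 = X + Y j, Q_2 = U + V j.\<close>
definition Phi_denom :: "('p::finite, 'r::finite) qpoint \<Rightarrow> complex^('p + 'p)^('p + 'p)" where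
  "Phi_denom Q = (case Q of (A, B) \<Rightarrow> (\<chi> a c.
      case a of
        Inl i \<Rightarrow> (case c of Inl k \<Rightarrow> A $ Inl i $ k - A $ Inr (Inl i) $ k      \<comment> \<open>Z - X\<close>
                         | Inr k \<Rightarrow> B $ Inl i $ k - B $ Inr (Inl i) $ k)     \<comment> \<open>W - Y\<close>
      | Inr i \<Rightarrow> (case c of Inl k \<Rightarrow> cnj (B $ Inr (Inl i) $ k) - cnj (B $ Inl i $ k)  \<comment> \<open>conj Y - conj W\<close>
                         | Inr k \<Rightarrow> cnj (A $ Inl i $ k) - cnj (A $ Inr (Inl i) $ k))))" \<comment> \<open>conj Z - conj X\<close>

definition Phi_num :: "('p::finite, 'r::finite) qpoint \<Rightarrow> complex^('p + 'p)^'r" where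
  "Phi_num Q = (case Q of (A, B) \<Rightarrow> (\<chi> s c.
      case c of Inl k \<Rightarrow> A $ Inr (Inr s) $ k    \<comment> \<open>U\<close>
              | Inr k \<Rightarrow> B $ Inr (Inr s) $ k))"  \<comment> \<open>V\<close>

definition Phi :: "('p::finite, 'r::finite) qpoint \<Rightarrow> complex^('p + 'p)^'r" where
  "Phi Q = Phi_num Q ** matrix_inv (Phi_denom Q)"

end

theory Submission
  imports Defs
begin

inductive good :: "'a::real_normed_vector set \<Rightarrow> ('a \<Rightarrow> complex) \<Rightarrow> bool" for S where
  gconst: "good S (\<lambda>x. c)"
| glin: "bounded_linear L \<Longrightarrow> good S L"
| gadd: "good S f \<Longrightarrow> good S g \<Longrightarrow> good S (\<lambda>x. f x + g x)"
| gmult: "good S f \<Longrightarrow> good S g \<Longrightarrow> good S (\<lambda>x. f x * g x)"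
| ginv: "good S f \<Longrightarrow> (\<forall>x\<in>S. f x \<noteq> 0) \<Longrightarrow> good S (\<lambda>x. inverse (f x))"

lemma good_neg: "good S f \<Longrightarrow> good S (\<lambda>x. - f x)"
  using gmult[OF gconst[of S "-1"], of f] by simp

lemma good_deriv:
  assumes "good S f"
  shows "\<exists>F. (\<forall>v. good S (\<lambda>x. F x v)) \<and> (\<forall>x\<in>S. (f has_derivative F x) (at x))"
  using assms
proof induction
  case (gconst c)
  show ?case by (rule exI[of _ "\<lambda>x v. 0"]) (auto intro: good.gconst)
next
  case (glin L)
  show ?case by (rule exI[of _ "\<lambda>x. L"]) (auto intro: good.gconst bounded_linear.has_derivative[OF glin] has_derivative_ident)
next
  case (gadd f g)
  then obtain F G where F: "\<forall>v. good S (\<lambda>x. F x v)" "\<forall>x\<in>S. (f has_derivative F x) (at x)"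
    and G: "\<forall>v. good S (\<lambda>x. G x v)" "\<forall>x\<in>S. (g has_derivative G x) (at x)" by blast
  show ?case
    by (rule exI[of _ "\<lambda>x v. F x v + G x v"]) (use F G in \<open>auto intro: good.gadd has_derivative_add\<close>)
next
  case (gmult f g)
  then obtain F G where F: "\<forall>v. good S (\<lambda>x. F x v)" "\<forall>x\<in>S. (f has_derivative F x) (at x)"
    and G: "\<forall>v. good S (\<lambda>x. G x v)" "\<forall>x\<in>S. (g has_derivative G x) (at x)" by blast
  show ?case
    by (rule exI[of _ "\<lambda>x v. f x * G x v + F x v * g x"])
       (use F G gmult in \<open>auto intro!: good.gadd good.gmult has_derivative_mult\<close>)
next
  case (ginv f)
  then obtain F where F: "\<forall>v. good S (\<lambda>x. F x v)" "\<forall>x\<in>S. (f has_derivative F x) (at x)" by blast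
  have gi: "good S (\<lambda>x. inverse (f x))" using ginv by (intro good.ginv)
  show ?case
    by (rule exI[of _ "\<lambda>x v. - (inverse (f x) * F x v * inverse (f x))"])
       (use F gi ginv in \<open>auto intro!: good_neg good.gmult has_derivative_inverse\<close>)
qed

lemma dpart_line:
  fixes f :: "'a::real_normed_vector \<Rightarrow> complex"
  assumes "f differentiable (at Q)"
  shows "((\<lambda>t. f (Q + t *\<^sub>R u)) has_vector_derivative dpart f Q u) (at 0)"
proof -
  have d: "(f has_derivative dpart f Q) (at Q)"
    using assms unfolding dpart_def by (simp add: frechet_derivative_works[symmetric] fun_eq_iff)
  have l: "linear (dpart f Q)" using has_derivative_linear[OF d] .
  have "((\<lambda>t. Q + t *\<^sub>R u) has_derivative (\<lambda>t. t *\<^sub>R u)) (at 0)"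
    by (auto intro!: derivative_eq_intros)
  from has_derivative_compose[OF this, of f "dpart f Q"] d
  have "((\<lambda>t. f (Q + t *\<^sub>R u)) has_derivative (\<lambda>t. dpart f Q (t *\<^sub>R u))) (at 0)" by simp
  then show ?thesis unfolding has_vector_derivative_def using linear_scale[OF l] by simp
qed

lemma dpart_shift:
  fixes f :: "'a::real_normed_vector \<Rightarrow> complex"
  assumes "\<And>x. f (y + x) = f (z + x)"
  shows "dpart f y = dpart f z"
proof -
  have e: "\<And>w. f w = f (w + (z - y))" "\<And>w. f w = f (w + (y - z))"
    using assms by (metis add.commute diff_add_cancel add_diff_eq)+
  have "(f has_derivative D) (at y) \<longleftrightarrow> (f has_derivative D) (at z)" for D
  proof
    assume "(f has_derivative D) (at y)"
    moreover have "((\<lambda>w. w + (y - z)) has_derivative id) (at z)"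
      by (auto intro!: derivative_eq_intros simp: id_def)
    ultimately have "((\<lambda>w. f (w + (y - z))) has_derivative D) (at z)"
      using has_derivative_compose[of "\<lambda>w. w + (y - z)" id z UNIV f D] by (simp add: o_def id_def)
    then show "(f has_derivative D) (at z)" using e(2) by simp
  next
    assume "(f has_derivative D) (at z)"
    moreover have "((\<lambda>w. w + (z - y)) has_derivative id) (at y)"
      by (auto intro!: derivative_eq_intros simp: id_def)
    ultimately have "((\<lambda>w. f (w + (z - y))) has_derivative D) (at y)"
      using has_derivative_compose[of "\<lambda>w. w + (z - y)" id y UNIV f D] by (simp add: o_def id_def)
    then show "(f has_derivative D) (at y)" using e(1) by simp
  qed
  then show ?thesis unfolding dpart_def frechet_derivative_def by (auto intro!: ext)
qed

lemma dpart_local: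
  fixes f :: "'a::real_normed_vector \<Rightarrow> complex"
  assumes "open S" "x \<in> S" "\<And>y. y \<in> S \<Longrightarrow> f y = g y"
  shows "dpart f x = dpart g x"
proof -
  have "(f has_derivative D) (at x) \<longleftrightarrow> (g has_derivative D) (at x)" for D
    using has_derivative_transform_within_open[OF _ assms(1,2), of f D UNIV g]
          has_derivative_transform_within_open[OF _ assms(1,2), of g D UNIV f] assms(3) by auto
  then show ?thesis unfolding dpart_def frechet_derivative_def by (auto intro!: ext)
qed

lemma dpart_neg:
  fixes f :: "'a::real_normed_vector \<Rightarrow> complex"
  assumes "f differentiable (at Q)"
  shows "dpart f Q (- v) = - dpart f Q v"
proof -
  have d: "(f has_derivative dpart f Q) (at Q)"
    using assms unfolding dpart_def by (simp add: frechet_derivative_works[symmetric] fun_eq_iff)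
  show ?thesis using linear_neg[OF has_derivative_linear[OF d]] .
qed

lemma dpart_uminus_fun:
  fixes f :: "'a::real_normed_vector \<Rightarrow> complex"
  assumes "f differentiable (at Q)"
  shows "dpart (\<lambda>x. - f x) Q v = - dpart f Q v"
proof -
  have d: "(f has_derivative dpart f Q) (at Q)"
    using assms unfolding dpart_def by (simp add: frechet_derivative_works[symmetric] fun_eq_iff)
  have "((\<lambda>x. - f x) has_derivative (\<lambda>v. - dpart f Q v)) (at Q)"
    using has_derivative_minus[OF d] .
  from frechet_derivative_at[OF this] show ?thesis unfolding dpart_def by (metis)
qed

lemma dpart_has:
  fixes f :: "'a::real_normed_vector \<Rightarrow> complex"
  assumes "(f has_derivative D) (at Q)"
  shows "dpart f Q = D"
  using frechet_derivative_at[OF assms] unfolding dpart_def by simp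

lemma good_sum: "finite I \<Longrightarrow> (\<And>i. i \<in> I \<Longrightarrow> good S (f i)) \<Longrightarrow> good S (\<lambda>x. \<Sum>i\<in>I. f i x)"
  by (induction I rule: finite_induct) (auto intro: gconst gadd)

lemma good_prod: "finite I \<Longrightarrow> (\<And>i. i \<in> I \<Longrightarrow> good S (f i)) \<Longrightarrow> good S (\<lambda>x. \<Prod>i\<in>I. f i x)"
  by (induction I rule: finite_induct) (auto intro: gconst gmult)

lemma good_det:
  fixes M :: "'a::real_normed_vector \<Rightarrow> complex^'n::finite^'n"
  assumes "\<And>i j. good S (\<lambda>x. M x $ i $ j)"
  shows "good S (\<lambda>x. det (M x))"
  unfolding det_def
  by (intro good_sum good_prod gmult gconst assms) auto

lemma invertible_matrix_inv:
  fixes A :: "'a::semiring_1^'n^'n"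
  assumes "invertible A"
  shows "A ** matrix_inv A = mat 1" "matrix_inv A ** A = mat 1"
  using someI_ex[OF assms[unfolded invertible_def]] unfolding matrix_inv_def by auto

lemma matrix_inv_cramer:
  fixes A :: "complex^'n::finite^'n"
  assumes "det A \<noteq> 0"
  shows "matrix_inv A $ d $ c = det (\<chi> i j. if j = d then (if i = c then 1 else 0) else A $ i $ j) / det A"
proof -
  have inv: "invertible A" using assms invertible_det_nz by blast
  let ?b = "(\<chi> i. if i = c then 1 else 0) :: complex^'n"
  have "A *v (matrix_inv A *v ?b) = ?b"
    by (simp add: matrix_vector_mul_assoc invertible_matrix_inv[OF inv])
  from iffD1[OF cramer[OF assms] this]
  have "matrix_inv A *v ?b = (\<chi> k. det(\<chi> i j. if j=k then ?b$i else A$i$j) / det A)" .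
  then have "(matrix_inv A *v ?b) $ d = det(\<chi> i j. if j=d then ?b$i else A$i$j) / det A" by simp
  moreover have "(matrix_inv A *v ?b) $ d = matrix_inv A $ d $ c"
    by (simp add: matrix_vector_mult_def if_distrib cong: if_cong)
  moreover have "(\<chi> i j. if j = d then ?b$i else A$i$j) = (\<chi> i j. if j = d then (if i = c then 1 else 0) else A$i$j)"
    by (simp add: vec_eq_iff)
  ultimately show ?thesis by metis
qed

lemma lin_denom: "bounded_linear (\<lambda>Q::('p::finite,'r::finite) qpoint. Phi_denom Q $ i $ j)"
  unfolding linear_conv_bounded_linear[symmetric]
  by (rule linearI) (auto simp: Phi_denom_def simp: prod.case_eq_if scaleR_right_diff_distrib complex_cnj_scaleR split: sum.splits)

lemma lin_num: "bounded_linear (\<lambda>Q::('p::finite,'r::finite) qpoint. Phi_num Q $ i $ j)"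
  unfolding linear_conv_bounded_linear[symmetric]
  by (rule linearI) (auto simp: Phi_num_def simp: prod.case_eq_if scaleR_right_diff_distrib complex_cnj_scaleR split: sum.splits)

definition Sdet :: "('p::finite,'r::finite) qpoint set" where
  "Sdet = {Q. det (Phi_denom Q) \<noteq> 0}"

lemma good_det_denom: "good S (\<lambda>Q::('p::finite,'r::finite) qpoint. det (Phi_denom Q))"
  by (intro good_det glin lin_denom)

lemma open_Sdet: "open (Sdet :: ('p::finite,'r::finite) qpoint set)"
proof -
  obtain F where F: "\<forall>x\<in>UNIV. ((\<lambda>Q::('p,'r) qpoint. det (Phi_denom Q)) has_derivative F x) (at x)"
    using good_deriv[OF good_det_denom[of UNIV]] by blast
  have "continuous_on UNIV (\<lambda>Q::('p,'r) qpoint. det (Phi_denom Q))"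
    using F has_derivative_continuous continuous_at_imp_continuous_on by blast
  then show ?thesis unfolding Sdet_def by (intro open_Collect_neq) auto
qed

definition Phi_alt :: "('p::finite,'r::finite) qpoint \<Rightarrow> 'r \<Rightarrow> 'p + 'p \<Rightarrow> complex" where
  "Phi_alt Q s c = (\<Sum>d\<in>UNIV. Phi_num Q $ s $ d *
     (det (\<chi> i j. if j = d then (if i = c then 1 else 0) else Phi_denom Q $ i $ j) * inverse (det (Phi_denom Q))))"

lemma Phi_alt: "Q \<in> Sdet \<Longrightarrow> Phi Q $ s $ c = Phi_alt Q s c"
  unfolding Phi_def Phi_alt_def Sdet_def
  by (simp add: matrix_matrix_mult_def matrix_inv_cramer divide_inverse)

lemma good_ifc: "good S f \<Longrightarrow> good S (\<lambda>x. if P then c else f x)"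
  by (cases P) (auto intro: gconst)

lemma good_Phi_alt: "good Sdet (\<lambda>Q::('p::finite,'r::finite) qpoint. Phi_alt Q s c)"
  unfolding Phi_alt_def
proof (intro good_sum gmult ginv good_det)
  fix d i j
  show "good Sdet (\<lambda>Q::('p,'r) qpoint. (\<chi> i j. if j = d then (if i = c then 1 else 0) else Phi_denom Q $ i $ j) $ i $ j)"
  proof -
    have e: "(\<lambda>Q::('p,'r) qpoint. (\<chi> i j. if j = d then (if i = c then 1 else 0) else Phi_denom Q $ i $ j) $ i $ j)
        = (\<lambda>Q. if j = d then (if i = c then 1 else 0) else Phi_denom Q $ i $ j)" by (simp add: fun_eq_iff)
    show ?thesis unfolding e by (intro good_ifc glin lin_denom)
  qed
qed (auto simp: Sdet_def intro: glin lin_num lin_denom good_det)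

lemma good_twice:
  fixes f :: "'a::real_normed_vector \<Rightarrow> complex"
  assumes "good S g" "open S" "\<And>x. x \<in> S \<Longrightarrow> f x = g x"
  shows "twice_diff_on f S"
proof -
  obtain G where G: "\<forall>v. good S (\<lambda>x. G x v)" "\<forall>x\<in>S. (g has_derivative G x) (at x)"
    using good_deriv[OF assms(1)] by blast
  have fd: "(f has_derivative G x) (at x)" if "x \<in> S" for x
    using has_derivative_transform_within_open[OF _ assms(2) that, of g "G x" UNIV f] G(2) that assms(3) by auto
  have dp: "dpart f x v = G x v" if "x \<in> S" for x v using dpart_has[OF fd[OF that]] by simp
  show ?thesis unfolding twice_diff_on_def
  proof (intro ballI conjI allI)
    fix x v assume x: "x \<in> S"
    show "f differentiable at x" using fd[OF x] by (auto simp: differentiable_def)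
    obtain H where H: "\<forall>w. good S (\<lambda>y. H y w)" "\<forall>y\<in>S. ((\<lambda>y. G y v) has_derivative H y) (at y)"
      using good_deriv[OF G(1)[rule_format, of v]] by blast
    have "((\<lambda>y. dpart f y v) has_derivative H x) (at x)"
      using has_derivative_transform_within_open[OF _ assms(2) x, of "\<lambda>y. G y v" "H x" UNIV] H(2) x dp by auto
    then show "(\<lambda>y. dpart f y v) differentiable at x" by (auto simp: differentiable_def)
  qed
qed

lemma twice_Phi: "twice_diff_on (\<lambda>Q::('p::finite,'r::finite) qpoint. Phi Q $ s $ c) Sdet"
  by (rule good_twice[OF good_Phi_alt open_Sdet]) (simp add: Phi_alt)

lemma mm_add_r: "((A::'a::semiring_1^'n^'m) + B) ** C = A ** C + B ** C"
  by (vector matrix_matrix_mult_def sum.distrib[symmetric] field_simps)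
lemma mm_add_l: "(A::'a::semiring_1^'n^'m) ** (B + C) = A ** B + A ** C"
  by (rule matrix_add_ldistrib)
lemma mm_diff_r: "((A::'a::ring_1^'n^'m) - B) ** C = A ** C - B ** C"
  by (vector matrix_matrix_mult_def sum_subtractf[symmetric] field_simps)
lemma mm_diff_l: "(A::'a::ring_1^'n^'m) ** (B - C) = A ** B - A ** C"
  by (vector matrix_matrix_mult_def sum_subtractf[symmetric] field_simps)
lemma mm_neg_r: "(- (A::'a::ring_1^'n^'m)) ** C = - (A ** C)"
  by (vector matrix_matrix_mult_def sum_negf[symmetric])
lemma mm_neg_l: "(A::'a::ring_1^'n^'m) ** (- C) = - (A ** C)"
  by (vector matrix_matrix_mult_def sum_negf[symmetric])

lemma cnj_mm: "cmat_cnj (A ** B) = cmat_cnj A ** cmat_cnj B"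
  by (simp add: cmat_cnj_def matrix_matrix_mult_def vec_eq_iff cnj_sum)
lemma cnj_add: "cmat_cnj (A + B) = cmat_cnj A + cmat_cnj B"
  by (simp add: cmat_cnj_def vec_eq_iff)
lemma cnj_diff: "cmat_cnj (A - B) = cmat_cnj A - cmat_cnj B"
  by (simp add: cmat_cnj_def vec_eq_iff)
lemma cnj_neg: "cmat_cnj (- A) = - cmat_cnj A"
  by (simp add: cmat_cnj_def vec_eq_iff)
lemma cnj_cnj: "cmat_cnj (cmat_cnj A) = A"
  by (simp add: cmat_cnj_def vec_eq_iff)
lemma cnj_0: "cmat_cnj 0 = 0"
  by (simp add: cmat_cnj_def vec_eq_iff)
lemma cnj_transpose: "cmat_cnj (transpose A) = transpose (cmat_cnj A)"
  by (simp add: cmat_cnj_def vec_eq_iff transpose_def)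
lemma transpose_add': "transpose (A + B) = transpose A + transpose (B::'a::semiring_1^'n^'m)"
  by (simp add: vec_eq_iff transpose_def)
lemma transpose_diff': "transpose (A - B) = transpose A - transpose (B::'a::ring_1^'n^'m)"
  by (simp add: vec_eq_iff transpose_def)
lemma transpose_neg': "transpose (- A) = - transpose (A::'a::ring_1^'n^'m)"
  by (simp add: vec_eq_iff transpose_def)

lemmas malg = mm_add_r mm_add_l mm_diff_r mm_diff_l mm_neg_r mm_neg_l cnj_mm cnj_add cnj_diff cnj_neg cnj_cnj
  matrix_mul_assoc

lemma qmult_assoc:
  fixes M :: "('m::finite,'n::finite) qmat" and N :: "('n,'k::finite) qmat" and P :: "('k,'l::finite) qmat"
  shows "qmult (qmult M N) P = qmult M (qmult N P)"
  by (cases M; cases N; cases P) (simp add: qmult_def malg algebra_simps)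

lemma qadj_qmult:
  fixes M :: "('m::finite,'n::finite) qmat" and N :: "('n,'k::finite) qmat"
  shows "qadj (qmult M N) = qmult (qadj N) (qadj M)"
  by (cases M; cases N) (simp add: qmult_def qadj_def malg matrix_transpose_mul cnj_transpose transpose_add' transpose_diff' transpose_neg' algebra_simps)

lemma sum_UNIV_plus: "(\<Sum>x\<in>(UNIV::('a::finite + 'b::finite) set). f x) = (\<Sum>i\<in>UNIV. f (Inl i)) + (\<Sum>i\<in>UNIV. f (Inr i))"
  using sum.Plus[of "UNIV::'a set" "UNIV::'b set" f] by (simp add: o_def)

definition rep :: "('m::finite,'n::finite) qmat \<Rightarrow> complex^('n+'n)^('m+'m)" where
  "rep g = (case g of (C,E) \<Rightarrow> (\<chi> a b. case a of
       Inl i \<Rightarrow> (case b of Inl k \<Rightarrow> C$i$k | Inr k \<Rightarrow> E$i$k)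
     | Inr i \<Rightarrow> (case b of Inl k \<Rightarrow> - cnj (E$i$k) | Inr k \<Rightarrow> cnj (C$i$k))))"

lemma rep_qmult:
  fixes M :: "('m::finite,'n::finite) qmat" and N :: "('n,'k::finite) qmat"
  shows "rep (qmult M N) = rep M ** rep N"
  by (cases M; cases N)
     (auto simp: vec_eq_iff rep_def qmult_def matrix_matrix_mult_def sum_UNIV_plus cmat_cnj_def
        cnj_sum sum_subtractf sum_negf split: sum.splits)

lemma rep_qid: "rep (qid :: ('n::finite,'n) qmat) = mat 1"
  by (auto simp: vec_eq_iff rep_def qid_def mat_def split: sum.splits)

lemma denom_qmult:
  fixes Q :: "('p::finite,'r::finite) qpoint" and g :: "('p,'p) qmat"
  shows "Phi_denom (qmult Q g) = Phi_denom Q ** rep g"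
  by (cases Q; cases g)
     (auto simp: vec_eq_iff rep_def qmult_def Phi_denom_def matrix_matrix_mult_def sum_UNIV_plus cmat_cnj_def
        cnj_sum sum_subtractf sum_negf algebra_simps split: sum.splits)

lemma num_qmult:
  fixes Q :: "('p::finite,'r::finite) qpoint" and g :: "('p,'p) qmat"
  shows "Phi_num (qmult Q g) = Phi_num Q ** rep g"
  by (cases Q; cases g)
     (auto simp: vec_eq_iff rep_def qmult_def Phi_num_def matrix_matrix_mult_def sum_UNIV_plus cmat_cnj_def
        cnj_sum sum_subtractf sum_negf algebra_simps split: sum.splits)

lemma matrix_inv_unique:
  fixes A :: "'a::semiring_1^'n^'n"
  assumes "A ** B = mat 1" "B ** A = mat 1"
  shows "matrix_inv A = B"
proof -
  have "invertible A" using assms unfolding invertible_def by blast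
  then have X: "A ** matrix_inv A = mat 1" "matrix_inv A ** A = mat 1"
    using someI_ex[OF \<open>invertible A\<close>[unfolded invertible_def]] unfolding matrix_inv_def by auto
  have "matrix_inv A = matrix_inv A ** (A ** B)" using assms by simp
  also have "\<dots> = B" by (simp add: matrix_mul_assoc X)
  finally show ?thesis .
qed

lemma Phi_qmult:
  fixes Q :: "('p::finite,'r::finite) qpoint" and g :: "('p,'p) qmat"
  assumes inv: "invertible (Phi_denom Q)" and g: "qinvertible g"
  shows "Phi (qmult Q g) = Phi Q"
proof -
  obtain h where h: "qmult g h = qid" "qmult h g = qid" using g unfolding qinvertible_def by blast
  have R: "rep g ** rep h = mat 1" "rep h ** rep g = mat 1"
    using h by (metis rep_qmult rep_qid)+
  let ?D = "Phi_denom Q" let ?Di = "matrix_inv (Phi_denom Q)"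
  have Di: "?D ** ?Di = mat 1" "?Di ** ?D = mat 1"
    using someI_ex[OF inv[unfolded invertible_def]] unfolding matrix_inv_def by auto
  have "(?D ** rep g) ** (rep h ** ?Di) = mat 1"
    by (metis Di(1) R(1) matrix_mul_assoc matrix_mul_rid)
  moreover have "(rep h ** ?Di) ** (?D ** rep g) = mat 1"
    by (metis Di(2) R(2) matrix_mul_assoc matrix_mul_rid)
  ultimately have "matrix_inv (?D ** rep g) = rep h ** ?Di" by (rule matrix_inv_unique)
  then show ?thesis unfolding Phi_def denom_qmult num_qmult
    by (metis R(1) matrix_mul_assoc matrix_mul_rid)
qed

definition sgnr :: "'p + ('p + 'r) \<Rightarrow> complex" where
  "sgnr a = (case a of Inl _ \<Rightarrow> -1 | Inr _ \<Rightarrow> 1)"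

lemma Jsig_mm: "((Jsig :: complex^('p::finite + ('p + 'r::finite))^('p + ('p + 'r))) ** M) $ a $ k = sgnr a * M $ a $ k"
  unfolding Jsig_def matrix_matrix_mult_def sgnr_def
  by (simp add: if_distrib if_distribR sum.delta cong: if_cong split: sum.splits)

lemma Jsig_mm': "((Jsig :: complex^('p::finite + ('p + 'r::finite))^('p + ('p + 'r))) ** M) = (\<chi> a k. sgnr a * M $ a $ k)"
  by (simp add: vec_eq_iff Jsig_mm)

lemma cmod_sq: "cmod z * cmod z = Re z * Re z + Im z * Im z"
  using cmod_power2[of z] by (simp add: power2_eq_square)

lemma form_value:
  fixes y :: "('p::finite + ('p + 'r::finite), 1) qmat"
  shows "Re (fst (qmult (qadj y) (qmult (Jsig, 0) y)) $ 1 $ 1) =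
     (\<Sum>a\<in>UNIV. Re (sgnr a) * ((cmod (fst y $ a $ 1))\<^sup>2 + (cmod (snd y $ a $ 1))\<^sup>2))"
proof (cases y)
  case (Pair c d)
  have "fst (qmult (qadj y) (qmult (Jsig, 0) y)) $ 1 $ 1 =
     (\<Sum>a\<in>UNIV. cnj (c $ a $ 1) * (sgnr a * c $ a $ 1) + d $ a $ 1 * cnj (sgnr a * d $ a $ 1))"
    unfolding Pair qmult_def qadj_def
    apply (simp only: Jsig_mm' mm_neg_r times0_left diff_zero add_0_right fst_conv snd_conv prod.case)
    apply (simp add: matrix_matrix_mult_def transpose_def cmat_cnj_def)
    apply (rule sum.distrib[symmetric])
    done
  also have "Re \<dots> = (\<Sum>a\<in>UNIV. Re (sgnr a) * ((cmod (c $ a $ 1))\<^sup>2 + (cmod (d $ a $ 1))\<^sup>2))"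
    unfolding Re_sum
  proof (rule sum.cong)
    fix a :: "'p + ('p + 'r)"
    have s: "sgnr a = complex_of_real (Re (sgnr a))" by (simp add: sgnr_def complex_eq_iff split: sum.splits)
    show "Re (cnj (c $ a $ 1) * (sgnr a * c $ a $ 1) + d $ a $ 1 * cnj (sgnr a * d $ a $ 1)) =
        Re (sgnr a) * ((cmod (c $ a $ 1))\<^sup>2 + (cmod (d $ a $ 1))\<^sup>2)"
      by (cases a) (simp_all add: sgnr_def power2_eq_square cmod_sq algebra_simps)
  qed simp
  finally show ?thesis by (simp add: Pair)
qed

lemma Upq_inv:
  fixes Q :: "('p::finite,'r::finite) qpoint"
  assumes Q: "Q \<in> Upq"
  shows "invertible (Phi_denom Q)"
proof (rule ccontr)
  assume ni: "\<not> invertible (Phi_denom Q)"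
  then obtain x where x: "Phi_denom Q *v x = 0" "x \<noteq> 0"
    using matrix_left_invertible_ker[of "Phi_denom Q"] invertible_left_inverse by blast
  obtain A B where QAB: "Q = (A, B)" by (cases Q)
  define \<xi> :: "('p, 1) qmat" where "\<xi> = ((\<chi> i j. x $ Inl i), (\<chi> i j. - cnj (x $ Inr i)))"
  have xi0: "\<xi> \<noteq> 0"
  proof
    assume "\<xi> = 0"
    then have "x $ Inl i = 0" "x $ Inr i = 0" for i
      unfolding \<xi>_def by (auto simp: vec_eq_iff zero_prod_def dest: spec[of _ i])
    then have "x = 0" by (simp add: vec_eq_iff) (metis sum.exhaust)
    with x show False by simp
  qed
  define y where "y = qmult Q \<xi>"
  have key: "qmult (qadj \<xi>) (qmult (qmult (qadj Q) (qmult (Jsig, 0) Q)) \<xi>) = qmult (qadj y) (qmult (Jsig, 0) y)"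
    unfolding y_def by (simp add: qmult_assoc qadj_qmult)
  have neg: "Re (fst (qmult (qadj y) (qmult (Jsig, 0) y)) $ 1 $ 1) < 0"
    using Q xi0 unfolding Upq_def qneg_def_def key[symmetric] by blast
  have fy: "fst y $ a $ 1 = (\<Sum>k\<in>UNIV. A $ a $ k * x $ Inl k + B $ a $ k * x $ Inr k)" for a
    unfolding y_def QAB \<xi>_def qmult_def by (simp add: matrix_matrix_mult_def cmat_cnj_def sum_subtractf[symmetric])
  have sy: "snd y $ a $ 1 = (\<Sum>k\<in>UNIV. B $ a $ k * cnj (x $ Inl k) - A $ a $ k * cnj (x $ Inr k))" for a
    unfolding y_def QAB \<xi>_def qmult_def by (simp add: matrix_matrix_mult_def cmat_cnj_def sum.distrib[symmetric] algebra_simps)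
  have D1: "(Phi_denom Q *v x) $ Inl i = fst y $ Inl i $ 1 - fst y $ Inr (Inl i) $ 1" for i
    unfolding fy QAB Phi_denom_def
    by (simp add: matrix_vector_mult_def sum_UNIV_plus sum_subtractf[symmetric] sum.distrib[symmetric] algebra_simps)
  have D2: "cnj ((Phi_denom Q *v x) $ Inr i) = - (snd y $ Inl i $ 1 - snd y $ Inr (Inl i) $ 1)" for i
    unfolding sy QAB Phi_denom_def
    by (simp add: matrix_vector_mult_def sum_UNIV_plus cnj_sum sum_subtractf[symmetric] sum.distrib[symmetric] 
         sum_negf[symmetric] algebra_simps)
  have e1: "fst y $ Inl i $ 1 = fst y $ Inr (Inl i) $ 1" for i using D1[of i] x(1) by simp
  have e2: "snd y $ Inl i $ 1 = snd y $ Inr (Inl i) $ 1" for i using D2[of i] x(1) by simp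
  have "0 \<le> (\<Sum>a\<in>UNIV. Re (sgnr a) * ((cmod (fst y $ a $ 1))\<^sup>2 + (cmod (snd y $ a $ 1))\<^sup>2))"
    by (simp add: sum_UNIV_plus sgnr_def e1 e2 sum_subtractf sum.distrib sum_negf sum_nonneg add_nonneg_nonneg)
  with neg show False unfolding form_value by simp
qed

lemma sum_Basis_prod_gen:
  "(\<Sum>b\<in>(Basis::('a::euclidean_space \<times> 'b::euclidean_space) set). F b) =
     (\<Sum>i\<in>Basis. F (i, 0)) + (\<Sum>i\<in>Basis. F (0, i))"
proof -
  have "inj_on (\<lambda>u. (u::'a, 0::'b)) Basis" "inj_on (\<lambda>u. (0::'a, u::'b)) Basis"
    by (auto intro!: inj_onI Pair_inject)
  thus ?thesis
    unfolding Basis_prod_def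
    by (subst sum.union_disjoint) (auto simp: Basis_prod_def sum.reindex)
qed

lemma sum_Basis_vec_gen:
  "(\<Sum>b\<in>(Basis::('a::euclidean_space ^ 'n::finite) set). F b) = (\<Sum>i\<in>UNIV. \<Sum>u\<in>Basis. F (axis i u))"
proof -
  have B: "(Basis::('a ^ 'n) set) = (\<lambda>(i,u). axis i u) ` (UNIV \<times> Basis)"
    unfolding Basis_vec_def by auto
  have inj: "inj_on (\<lambda>(i,u). axis i u :: 'a^'n) (UNIV \<times> Basis)"
    by (auto intro!: inj_onI simp: axis_eq_axis nonzero_Basis)
  show ?thesis unfolding B sum.reindex[OF inj]
    by (simp add: sum.cartesian_product split_def)
qed

lemma sum_Basis_complex: "(\<Sum>u\<in>(Basis::complex set). F u) = F 1 + F \<i>"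
  by (simp add: Basis_complex_def)

definition ax :: "'a \<Rightarrow> 'b \<Rightarrow> complex \<Rightarrow> complex^'b^'a" where
  "ax a k u = axis a (axis k u)"

definition emb :: "bool \<Rightarrow> complex^'p^('p + ('p + 'r)) \<Rightarrow> ('p::finite,'r::finite) qpoint" where
  "emb c M = (if c then (0, M) else (M, 0))"

lemma sum_Basis_qpoint:
  "(\<Sum>b\<in>(Basis::('p::finite,'r::finite) qpoint set). F b) =
    (\<Sum>c\<in>UNIV. \<Sum>a\<in>UNIV. \<Sum>k\<in>UNIV. F (emb c (ax a k 1)) + F (emb c (ax a k \<i>)))"
  unfolding sum_Basis_prod_gen sum_Basis_vec_gen sum_Basis_complex
  by (simp add: UNIV_bool emb_def ax_def add.commute)

lemma ax_entry: "ax a k u $ a' $ k' = (if a' = a \<and> k' = k then u else 0)"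
  by (simp add: ax_def axis_def)

lemma Im_sgnr: "Im (sgnr a) = 0"
  by (simp add: sgnr_def split: sum.splits)

lemma sE_emb:
  fixes M :: "complex^'p::finite^('p + ('p + 'r::finite))"
  shows "sE_metric (emb c M :: ('p,'r) qpoint) (emb c M) = (\<Sum>a\<in>UNIV. \<Sum>k\<in>UNIV. Re (sgnr a) * (cmod (M $ a $ k))\<^sup>2)"
proof -
  have *: "Re (cnj z * (sgnr a * z)) = Re (sgnr a) * (cmod z)\<^sup>2" for z and a :: "'p + ('p + 'r)"
    by (cases a) (simp_all add: sgnr_def power2_eq_square cmod_sq algebra_simps)
  have **: "Re (z * cnj (sgnr a * z)) = Re (sgnr a) * (cmod z)\<^sup>2" for z and a :: "'p + ('p + 'r)"
    by (cases a) (simp_all add: sgnr_def power2_eq_square cmod_sq algebra_simps)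
  show ?thesis
    unfolding sE_metric_def emb_def qmult_def qadj_def
    apply (cases c)
     apply (simp_all only: Jsig_mm' mm_neg_r times0_left times0_right diff_zero add_0_right fst_conv snd_conv prod.case if_True if_False
       transpose_neg' neg_0_equal_iff_equal cnj_0 add_0_left diff_0_right minus_zero)
     apply (simp_all add: trace_def matrix_matrix_mult_def transpose_def cmat_cnj_def Re_sum Im_sgnr)
     apply (subst sum.swap, simp add: power2_eq_square cmod_sq algebra_simps)
    apply (subst sum.swap, simp add: power2_eq_square cmod_sq algebra_simps)
    done
qed

lemma sE_basis:
  assumes "cmod u = 1"
  shows "sE_metric (emb c (ax a k u) :: ('p::finite,'r::finite) qpoint) (emb c (ax a k u)) = Re (sgnr a)"
proof -
  have "\<And>a' k'. Re (sgnr a') * (cmod (ax a k u $ a' $ k'))\<^sup>2 = (if k' = k then (if a' = a then Re (sgnr a) else 0) else 0)"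
    using assms by (simp add: ax_entry)
  then show ?thesis unfolding sE_emb by simp
qed

lemma denom_add: "Phi_denom (Q + R) = Phi_denom Q + Phi_denom R"
  by (simp add: vec_eq_iff linear_add[OF bounded_linear.linear[OF lin_denom]])
lemma denom_scale: "Phi_denom (t *\<^sub>R Q) = t *\<^sub>R Phi_denom Q"
  by (simp add: vec_eq_iff linear_scale[OF bounded_linear.linear[OF lin_denom]])
lemma denom_neg: "Phi_denom (- Q) = - Phi_denom Q"
  by (simp add: vec_eq_iff linear_neg[OF bounded_linear.linear[OF lin_denom]])
lemma num_add: "Phi_num (Q + R) = Phi_num Q + Phi_num R"
  by (simp add: vec_eq_iff linear_add[OF bounded_linear.linear[OF lin_num]])
lemma num_scale: "Phi_num (t *\<^sub>R Q) = t *\<^sub>R Phi_num Q"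
  by (simp add: vec_eq_iff linear_scale[OF bounded_linear.linear[OF lin_num]])
lemma num_neg: "Phi_num (- Q) = - Phi_num Q"
  by (simp add: vec_eq_iff linear_neg[OF bounded_linear.linear[OF lin_num]])

lemma denom_diff: "Phi_denom (Q - R) = Phi_denom Q - Phi_denom R"
  by (simp add: vec_eq_iff linear_diff[OF bounded_linear.linear[OF lin_denom]])
lemma num_diff: "Phi_num (Q - R) = Phi_num Q - Phi_num R"
  by (simp add: vec_eq_iff linear_diff[OF bounded_linear.linear[OF lin_num]])

lemma denom_pair: "Phi_denom (emb c (ax (Inl i) k u) :: ('p::finite,'r::finite) qpoint) =
     - Phi_denom (emb c (ax (Inr (Inl i)) k u) :: ('p,'r) qpoint)"
  by (cases c) (auto simp: vec_eq_iff Phi_denom_def emb_def ax_entry split: sum.splits)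

lemma num_low: "Phi_num (emb c (ax (Inl i) k u) :: ('p::finite,'r::finite) qpoint) = 0"
  "Phi_num (emb c (ax (Inr (Inl i)) k u) :: ('p::finite,'r::finite) qpoint) = 0"
  by (cases c; auto simp: vec_eq_iff Phi_num_def emb_def ax_entry split: sum.splits)+

lemma denom_high: "Phi_denom (emb c (ax (Inr (Inr s')) k u) :: ('p::finite,'r::finite) qpoint) = 0"
  by (cases c) (auto simp: vec_eq_iff Phi_denom_def emb_def ax_entry split: sum.splits)

lemma num_high: "Phi_num (emb c (ax (Inr (Inr s')) k u) :: ('p::finite,'r::finite) qpoint) =
   (\<chi> s d. if s = s' \<and> d = (if c then Inr k else Inl k) then u else 0)"
  by (cases c) (auto simp: vec_eq_iff Phi_num_def emb_def ax_entry split: sum.splits)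

lemma Phi_pair:
  fixes Q :: "('p::finite,'r::finite) qpoint"
  shows "Phi (Q + t *\<^sub>R emb c (ax (Inl i) k u)) = Phi (Q + t *\<^sub>R (- emb c (ax (Inr (Inl i)) k u)))"
  unfolding Phi_def by (simp add: denom_add denom_scale denom_neg num_add num_scale num_neg num_low denom_pair denom_diff num_diff)

definition Kf :: "('p::finite,'r::finite) qpoint \<Rightarrow> 'r \<Rightarrow> 'p + 'p \<Rightarrow> 'r \<Rightarrow> bool \<Rightarrow> 'p \<Rightarrow> complex" where
  "Kf Q s col s' c k = (if s = s' then matrix_inv (Phi_denom Q) $ (if c then Inr k else Inl k) $ col else 0)"

lemma sum_if_mid: "(\<Sum>x\<in>UNIV. t *\<^sub>R ((if x = d then u else 0) * g x)) = of_real t * u * (g (d::'a::finite) :: complex)"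
proof -
  have "(\<Sum>x\<in>UNIV. t *\<^sub>R ((if x = d then u else 0) * g x)) = (\<Sum>x\<in>UNIV. if x = d then of_real t * u * g d else 0)"
    by (rule sum.cong) (auto simp: scaleR_conv_of_real)
  then show ?thesis by simp
qed

lemma Phi_high:
  fixes Q :: "('p::finite,'r::finite) qpoint"
  shows "Phi (Q + t *\<^sub>R emb c (ax (Inr (Inr s')) k u)) $ s $ col = Phi Q $ s $ col + of_real t * u * Kf Q s col s' c k"
proof -
  let ?E = "emb c (ax (Inr (Inr s')) k u) :: ('p,'r) qpoint"
  let ?Di = "matrix_inv (Phi_denom Q)"
  have "Phi (Q + t *\<^sub>R ?E) = Phi_num Q ** ?Di + (t *\<^sub>R Phi_num ?E) ** ?Di"
    unfolding Phi_def by (simp add: denom_add denom_scale denom_high num_add num_scale mm_add_r)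
  moreover have "((t *\<^sub>R Phi_num ?E) ** ?Di) $ s $ col = of_real t * u * Kf Q s col s' c k"
    unfolding num_high Kf_def matrix_matrix_mult_def
    by (cases "s = s'"; cases c) (simp_all add: vector_scaleR_component sum_if_mid)
  ultimately show ?thesis unfolding Phi_def by simp
qed

lemma Kf_high:
  "Kf (Q + t *\<^sub>R emb c' (ax (Inr (Inr s'')) k' u)) = Kf (Q :: ('p::finite,'r::finite) qpoint)"
  unfolding Kf_def by (simp add: denom_add denom_scale denom_high fun_eq_iff)

lemma Sdet_high:
  "(Q + t *\<^sub>R emb c' (ax (Inr (Inr s'')) k' u) \<in> Sdet) = ((Q :: ('p::finite,'r::finite) qpoint) \<in> Sdet)"
  unfolding Sdet_def by (simp add: denom_add denom_scale denom_high)

lemma dpart_eq_line: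
  fixes f :: "'a::real_normed_vector \<Rightarrow> complex"
  assumes "f differentiable (at Q)" "\<And>t. f (Q + t *\<^sub>R v) = f (Q + t *\<^sub>R w)"
  shows "dpart f Q v = dpart f Q w"
proof -
  have A: "((\<lambda>t. f (Q + t *\<^sub>R v)) has_vector_derivative dpart f Q v) (at 0)" by (rule dpart_line[OF assms(1)])
  have B: "((\<lambda>t. f (Q + t *\<^sub>R v)) has_vector_derivative dpart f Q w) (at 0)"
    unfolding assms(2) by (rule dpart_line[OF assms(1)])
  show ?thesis by (rule vector_derivative_unique_at[OF A B])
qed

lemma dpart_affine_line:
  fixes f :: "'a::real_normed_vector \<Rightarrow> complex"
  assumes "f differentiable (at Q)" "\<And>t. f (Q + t *\<^sub>R v) = f Q + of_real t * C"
  shows "dpart f Q v = C"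
proof -
  have l: "bounded_linear (\<lambda>t::real. t *\<^sub>R C)" by (rule bounded_linear_scaleR_left)
  have "((\<lambda>t. f Q + t *\<^sub>R C) has_derivative (\<lambda>t. 0 + t *\<^sub>R C)) (at 0)"
    by (rule has_derivative_add[OF has_derivative_const bounded_linear.has_derivative[OF l has_derivative_ident]])
  then have A: "((\<lambda>t. f (Q + t *\<^sub>R v)) has_vector_derivative C) (at 0)"
    unfolding has_vector_derivative_def assms(2) by (simp add: scaleR_conv_of_real)
  have B: "((\<lambda>t. f (Q + t *\<^sub>R v)) has_vector_derivative dpart f Q v) (at 0)" by (rule dpart_line[OF assms(1)])
  show ?thesis by (rule vector_derivative_unique_at[OF B A])
qed

lemma pair_lemma:
  fixes f :: "'a::real_normed_vector \<Rightarrow> complex"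
  assumes S: "open S" "Q \<in> S" and td: "twice_diff_on f S"
    and tr: "\<And>Q t. f (Q + t *\<^sub>R b1) = f (Q + t *\<^sub>R (- b2))"
  shows "dpart f Q b1 = - dpart f Q b2"
    "dpart (\<lambda>Q'. dpart f Q' b1) Q b1 = dpart (\<lambda>Q'. dpart f Q' b2) Q b2"
proof -
  have fd: "f differentiable (at Q')" if "Q' \<in> S" for Q' using td that unfolding twice_diff_on_def by blast
  have hd: "(\<lambda>Q'. dpart f Q' v) differentiable (at Q)" for v using td S(2) unfolding twice_diff_on_def by blast
  have first: "dpart f Q' b1 = - dpart f Q' b2" if "Q' \<in> S" for Q'
    using dpart_eq_line[OF fd[OF that] tr] dpart_neg[OF fd[OF that]] by simp
  then show "dpart f Q b1 = - dpart f Q b2" using S by simp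
  have trh: "dpart f (Q' + t *\<^sub>R b1) = dpart f (Q' + t *\<^sub>R (- b2))" for Q' t
  proof (rule dpart_shift)
    fix x
    have e: "Q' + t *\<^sub>R b1 + x = (Q' + x) + t *\<^sub>R b1" "Q' + t *\<^sub>R (- b2) + x = (Q' + x) + t *\<^sub>R (- b2)"
      by (simp_all only: add.assoc add.commute add.left_commute)
    show "f (Q' + t *\<^sub>R b1 + x) = f (Q' + t *\<^sub>R (- b2) + x)" unfolding e by (rule tr)
  qed
  have "dpart (\<lambda>Q'. dpart f Q' b1) Q b1 = dpart (\<lambda>Q'. dpart f Q' b1) Q (- b2)"
    by (rule dpart_eq_line[OF hd]) (simp add: trh)
  also have "\<dots> = dpart (\<lambda>Q'. - dpart f Q' b2) Q (- b2)"
    using dpart_local[OF S, of "\<lambda>Q'. dpart f Q' b1" "\<lambda>Q'. - dpart f Q' b2"] first by simp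
  also have "\<dots> = - dpart (\<lambda>Q'. dpart f Q' b2) Q (- b2)"
    using dpart_uminus_fun[OF hd] .
  also have "\<dots> = dpart (\<lambda>Q'. dpart f Q' b2) Q b2"
    using dpart_neg[OF hd] by simp
  finally show "dpart (\<lambda>Q'. dpart f Q' b1) Q b1 = dpart (\<lambda>Q'. dpart f Q' b2) Q b2" .
qed

lemma high_lemma:
  fixes f :: "'a::real_normed_vector \<Rightarrow> complex"
  assumes S: "Q \<in> S" and td: "twice_diff_on f S"
    and tr: "\<And>Q t. f (Q + t *\<^sub>R b) = f Q + of_real t * C Q"
    and Cinv: "\<And>Q t. C (Q + t *\<^sub>R b) = C Q"
    and Sinv: "\<And>Q t. Q \<in> S \<Longrightarrow> Q + t *\<^sub>R b \<in> S"
  shows "dpart f Q b = C Q" "dpart (\<lambda>Q'. dpart f Q' b) Q b = 0"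
proof -
  have fd: "f differentiable (at Q')" if "Q' \<in> S" for Q' using td that unfolding twice_diff_on_def by blast
  have hd: "(\<lambda>Q'. dpart f Q' v) differentiable (at Q)" for v using td S unfolding twice_diff_on_def by blast
  have first: "dpart f Q' b = C Q'" if "Q' \<in> S" for Q'
    using dpart_affine_line[OF fd[OF that] tr] .
  then show "dpart f Q b = C Q" using S by simp
  show "dpart (\<lambda>Q'. dpart f Q' b) Q b = 0"
    by (rule dpart_affine_line[OF hd]) (simp add: first[OF Sinv[OF S]] first[OF S] Cinv)
qed

lemma Upq_Sdet: "(Upq :: ('p::finite,'r::finite) qpoint set) \<subseteq> Sdet"
  using Upq_inv invertible_det_nz unfolding Sdet_def by blast

lemma D_pair:
  fixes Q :: "('p::finite,'r::finite) qpoint"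
  assumes Q: "Q \<in> Sdet"
  shows "dpart (\<lambda>Q. Phi Q $ s $ col) Q (emb c (ax (Inl i) k u)) = - dpart (\<lambda>Q. Phi Q $ s $ col) Q (emb c (ax (Inr (Inl i)) k u))"
    "dpart (\<lambda>Q'. dpart (\<lambda>Q. Phi Q $ s $ col) Q' (emb c (ax (Inl i) k u))) Q (emb c (ax (Inl i) k u)) =
     dpart (\<lambda>Q'. dpart (\<lambda>Q. Phi Q $ s $ col) Q' (emb c (ax (Inr (Inl i)) k u))) Q (emb c (ax (Inr (Inl i)) k u))"
proof -
  have tr: "\<And>Q t. Phi (Q + t *\<^sub>R emb c (ax (Inl i) k u)) $ s $ col = Phi (Q + t *\<^sub>R (- emb c (ax (Inr (Inl i)) k u))) $ s $ col"
    by (simp only: Phi_pair)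
  note pl = pair_lemma[OF open_Sdet Q twice_Phi tr]
  show "dpart (\<lambda>Q. Phi Q $ s $ col) Q (emb c (ax (Inl i) k u)) = - dpart (\<lambda>Q. Phi Q $ s $ col) Q (emb c (ax (Inr (Inl i)) k u))"
    by (rule pl(1))
  show "dpart (\<lambda>Q'. dpart (\<lambda>Q. Phi Q $ s $ col) Q' (emb c (ax (Inl i) k u))) Q (emb c (ax (Inl i) k u)) =
     dpart (\<lambda>Q'. dpart (\<lambda>Q. Phi Q $ s $ col) Q' (emb c (ax (Inr (Inl i)) k u))) Q (emb c (ax (Inr (Inl i)) k u))"
    by (rule pl(2))
qed

lemma D_high:
  fixes Q :: "('p::finite,'r::finite) qpoint"
  assumes Q: "Q \<in> Sdet"
  shows "dpart (\<lambda>Q. Phi Q $ s $ col) Q (emb c (ax (Inr (Inr s')) k u)) = u * Kf Q s col s' c k"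
    "dpart (\<lambda>Q'. dpart (\<lambda>Q. Phi Q $ s $ col) Q' (emb c (ax (Inr (Inr s')) k u))) Q (emb c (ax (Inr (Inr s')) k u)) = 0"
proof -
  have tr: "\<And>Q t. Phi (Q + t *\<^sub>R emb c (ax (Inr (Inr s')) k u)) $ s $ col = Phi Q $ s $ col + of_real t * (u * Kf Q s col s' c k)"
    by (simp add: Phi_high mult.assoc)
  have Ci: "\<And>Q t. u * Kf (Q + t *\<^sub>R emb c (ax (Inr (Inr s')) k u)) s col s' c k = u * Kf Q s col s' c k"
    by (simp add: Kf_high)
  have Si: "\<And>Q t. Q \<in> Sdet \<Longrightarrow> Q + t *\<^sub>R emb c (ax (Inr (Inr s')) k u) \<in> Sdet"
    by (simp add: Sdet_high)
  note h = high_lemma[OF Q twice_Phi tr Ci Si]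
  show "dpart (\<lambda>Q. Phi Q $ s $ col) Q (emb c (ax (Inr (Inr s')) k u)) = u * Kf Q s col s' c k"
    by (rule h(1))
  show "dpart (\<lambda>Q'. dpart (\<lambda>Q. Phi Q $ s $ col) Q' (emb c (ax (Inr (Inr s')) k u))) Q (emb c (ax (Inr (Inr s')) k u)) = 0"
    by (rule h(2))
qed

lemma tau_zero:
  fixes Q :: "('p::finite,'r::finite) qpoint"
  assumes Q: "Q \<in> Sdet"
  shows "tau (\<lambda>Q. Phi Q $ s $ col) Q = 0"
  unfolding tau_def sum_Basis_qpoint
  by (simp add: sE_basis sum_UNIV_plus sgnr_def D_pair[OF Q] D_high[OF Q] sum_negf sum.distrib)

lemma kappa_zero:
  fixes Q :: "('p::finite,'r::finite) qpoint"
  assumes Q: "Q \<in> Sdet"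
  shows "kappa (\<lambda>Q. Phi Q $ s $ col) (\<lambda>Q. Phi Q $ s2 $ col2) Q = 0"
  unfolding kappa_def sum_Basis_qpoint
  by (simp add: sE_basis sum_UNIV_plus sgnr_def D_pair[OF Q] D_high[OF Q] sum_negf sum.distrib algebra_simps)

theorem proposition6p2:
  shows "orthogonal_harmonic_family (Upq :: ('p::finite, 'r::finite) qpoint set)
           {(\<lambda>Q. Phi Q $ s $ c) | s c. True}
       \<and> (\<forall>s c. GL_invariant_on (Upq :: ('p, 'r) qpoint set) (\<lambda>Q. Phi Q $ s $ c))"
proof (intro conjI allI)
  have td: "twice_diff_on (\<lambda>Q::('p,'r) qpoint. Phi Q $ s $ c) Upq" for s c
    using twice_Phi[of s c] Upq_Sdet unfolding twice_diff_on_def by blast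
  show "orthogonal_harmonic_family (Upq :: ('p, 'r) qpoint set) {(\<lambda>Q. Phi Q $ s $ c) | s c. True}"
    unfolding orthogonal_harmonic_family_def
    using td tau_zero kappa_zero Upq_Sdet by blast
  fix s c
  show "GL_invariant_on (Upq :: ('p, 'r) qpoint set) (\<lambda>Q. Phi Q $ s $ c)"
    unfolding GL_invariant_on_def
  proof (intro ballI allI impI)
    fix Q :: "('p,'r) qpoint" and g :: "('p,'p) qmat"
    assume "Q \<in> Upq" "qinvertible g"
    then show "Phi (qmult Q g) $ s $ c = Phi Q $ s $ c" using Phi_qmult Upq_inv by metis
  qed
qed

end
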